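(* For a graph $G$, $\gamma_{(2,2,0)}(G)=3$ if and only if $\gamma_{\times2,t}(G)=\gamma(G)+1=3$.
   Context: All graphs are finite and simple; $N(v)$ is the open neighbourhood. $\gamma_{(2,2,0)}(G)$ is the minimum of $\sum_v f(v)$ over functions $f:V(G)\to\{0,1,2\}$ such that $\sum_{u\in N(v)}f(u)\ge2$ for every $v$ with $f(v)\in\{0,1\}$. $\gamma(G)$ is the domination number and $\gamma_{\times2,t}(G)$ is the minimum size of $S\subseteq V(G)$ such that every vertex has at least two neighbours in $S$ (defined when $G$ has minimum degree at least $2$). *)

theory Defs
  imports Main
begin

definition simple_graph :: "'a set \<Rightarrow> ('a \<Rightarrow> 'a \<Rightarrow> bool) \<Rightarrow> bool" where
  "simple_graph V E \<longleftrightarrow> finite V \<and> (\<forall>u v. E u v \<longrightarrow> u \<in> V \<and> v \<in> V)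
     \<and> (\<forall>u v. E u v \<longrightarrow> E v u) \<and> (\<forall>v. \<not> E v v)"

definition nbhd :: "'a set \<Rightarrow> ('a \<Rightarrow> 'a \<Rightarrow> bool) \<Rightarrow> 'a \<Rightarrow> 'a set" where
  "nbhd V E v = {u \<in> V. E v u}"

definition min_degree_ge2 :: "'a set \<Rightarrow> ('a \<Rightarrow> 'a \<Rightarrow> bool) \<Rightarrow> bool" where
  "min_degree_ge2 V E \<longleftrightarrow> (\<forall>v\<in>V. card (nbhd V E v) \<ge> 2)"

definition is_220_function :: "'a set \<Rightarrow> ('a \<Rightarrow> 'a \<Rightarrow> bool) \<Rightarrow> ('a \<Rightarrow> nat) \<Rightarrow> bool" where
  "is_220_function V E f \<longleftrightarrow> (\<forall>v\<in>V. f v \<le> 2) \<and> (\<forall>v. v \<notin> V \<longrightarrow> f v = 0)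
     \<and> (\<forall>v\<in>V. f v \<in> {0,1} \<longrightarrow> (\<Sum>u\<in>nbhd V E v. f u) \<ge> 2)"

definition gamma_220 :: "'a set \<Rightarrow> ('a \<Rightarrow> 'a \<Rightarrow> bool) \<Rightarrow> nat" where
  "gamma_220 V E = Inf {(\<Sum>v\<in>V. f v) | f. is_220_function V E f}"

definition dominating_set :: "'a set \<Rightarrow> ('a \<Rightarrow> 'a \<Rightarrow> bool) \<Rightarrow> 'a set \<Rightarrow> bool" where
  "dominating_set V E S \<longleftrightarrow> S \<subseteq> V \<and> (\<forall>v\<in>V. v \<in> S \<or> (\<exists>u\<in>S. E v u))"

definition domination_number :: "'a set \<Rightarrow> ('a \<Rightarrow> 'a \<Rightarrow> bool) \<Rightarrow> nat" where
  "domination_number V E = Inf {card S | S. dominating_set V E S}"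

definition double_total_dominating_set :: "'a set \<Rightarrow> ('a \<Rightarrow> 'a \<Rightarrow> bool) \<Rightarrow> 'a set \<Rightarrow> bool" where
  "double_total_dominating_set V E S \<longleftrightarrow> S \<subseteq> V \<and> (\<forall>v\<in>V. card (nbhd V E v \<inter> S) \<ge> 2)"

text \<open>Only meaningful when the minimum degree is at least 2 (otherwise no such set exists).\<close>
definition double_total_domination_number :: "'a set \<Rightarrow> ('a \<Rightarrow> 'a \<Rightarrow> bool) \<Rightarrow> nat" where
  "double_total_domination_number V E = Inf {card S | S. double_total_dominating_set V E S}"

end

theory Submission
  imports Defs
begin

lemma Inf_nat_eq: assumes "A \<noteq> {}" shows "Inf A = (n::nat) \<longleftrightarrow> n \<in> A \<and> (\<forall>y\<in>A. n \<le> y)"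
proof
  assume h: "Inf A = n"
  thus "n \<in> A \<and> (\<forall>y\<in>A. n \<le> y)" using assms Inf_nat_def1[of A] by (metis cInf_lower bdd_below_bot)
next
  assume "n \<in> A \<and> (\<forall>y\<in>A. n \<le> y)"
  thus "Inf A = n" by (intro cInf_eq_minimum) auto
qed

lemma sum_indicator_card:
  assumes "finite A"
  shows "(\<Sum>u\<in>A. (if u \<in> S then 1 else 0::nat)) = card (A \<inter> S)"
proof -
  have "(\<Sum>u\<in>A. (if u \<in> S then 1 else 0::nat)) = (\<Sum>u\<in>{x\<in>A. x \<in> S}. 1)"
    using sum.inter_filter[OF assms, of "\<lambda>_. 1::nat" "\<lambda>u. u \<in> S"] by simp
  also have "\<dots> = card (A \<inter> S)" by (simp add: Int_def)
  finally show ?thesis .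
qed

context
  fixes V :: "'a set" and E :: "'a \<Rightarrow> 'a \<Rightarrow> bool"
  assumes G: "simple_graph V E"
begin

lemma finV: "finite V" using G by (simp add: simple_graph_def)

lemma nb_sub: "nbhd V E v \<subseteq> V" by (auto simp: nbhd_def)

lemma nb_not: "v \<notin> nbhd V E v" using G by (auto simp: nbhd_def simple_graph_def)

lemma fin_nb: "finite (nbhd V E v)" using finV nb_sub finite_subset by blast

lemma sum_sub: "T \<subseteq> V \<Longrightarrow> (\<Sum>u\<in>T. f u) \<le> (\<Sum>u\<in>V. (f u::nat))"
  using finV by (intro sum_mono2) auto

lemma sum_ins: assumes "x \<in> V" "x \<notin> T" "T \<subseteq> V"
  shows "f x + (\<Sum>u\<in>T. f u) \<le> (\<Sum>u\<in>V. (f u::nat))"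
proof -
  have "finite T" using finV assms(3) finite_subset by blast
  hence "f x + (\<Sum>u\<in>T. f u) = (\<Sum>u\<in>insert x T. f u)" using assms(2) by simp
  also have "\<dots> \<le> (\<Sum>u\<in>V. f u)" using assms by (intro sum_sub) auto
  finally show ?thesis .
qed

lemma singleton_220:
  assumes "x \<in> V" "\<forall>v\<in>V. v \<noteq> x \<longrightarrow> E v x"
  shows "is_220_function V E (\<lambda>v. if v = x then 2 else 0)"
    "(\<Sum>v\<in>V. (\<lambda>v. if v = x then 2 else 0::nat) v) = 2"
proof -
  show "is_220_function V E (\<lambda>v. if v = x then 2 else 0)"
    unfolding is_220_function_def
  proof (intro conjI ballI allI impI)
    fix v assume v: "v \<in> V" "(if v = x then 2 else 0::nat) \<in> {0,1}"
    hence "v \<noteq> x" by auto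
    hence xin: "x \<in> nbhd V E v" using assms v by (auto simp: nbhd_def)
    have "(\<Sum>u\<in>nbhd V E v. (if u = x then 2 else 0::nat)) = 2"
      using xin fin_nb by (simp add: sum.delta)
    thus "2 \<le> (\<Sum>u\<in>nbhd V E v. (if u = x then 2 else 0::nat))" by simp
  qed (use assms in auto)
  show "(\<Sum>v\<in>V. (\<lambda>v. if v = x then 2 else 0::nat) v) = 2"
    using assms finV by (simp add: sum.delta)
qed

lemma small_220:
  assumes f: "is_220_function V E f" and w: "(\<Sum>v\<in>V. f v) \<le> 2" and ne: "V \<noteq> {}"
  shows "\<exists>x\<in>V. \<forall>v\<in>V. v \<noteq> x \<longrightarrow> E v x"
proof -
  have f2: "\<And>v. v \<in> V \<Longrightarrow> f v \<le> 2" and fc: "\<And>v. v \<in> V \<Longrightarrow> f v \<in> {0,1} \<Longrightarrow> (\<Sum>u\<in>nbhd V E v. f u) \<ge> 2"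
    using f by (auto simp: is_220_function_def)
  have z: "f v = 0 \<or> f v = 2" if v: "v \<in> V" for v
  proof (rule ccontr)
    assume "\<not> (f v = 0 \<or> f v = 2)"
    hence "f v = 1" using f2[OF v] by auto
    moreover have "(\<Sum>u\<in>nbhd V E v. f u) \<ge> 2" using fc[OF v] \<open>f v = 1\<close> by auto
    moreover have "f v + (\<Sum>u\<in>nbhd V E v. f u) \<le> (\<Sum>u\<in>V. f u)"
      using sum_ins[OF v nb_not nb_sub] .
    ultimately show False using w by linarith
  qed
  obtain x where x: "x \<in> V" "f x = 2"
  proof (rule ccontr)
    assume "\<not> thesis"
    hence all0: "\<forall>v\<in>V. f v = 0" using z that by blast
    obtain v where v: "v \<in> V" using ne by auto
    have "(\<Sum>u\<in>nbhd V E v. f u) = 0" using all0 nb_sub by (auto intro!: sum.neutral)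
    thus False using fc[OF v] all0 v by auto
  qed
  show ?thesis
  proof (intro bexI[OF _ x(1)] ballI impI)
    fix v assume v: "v \<in> V" "v \<noteq> x"
    have fv: "f v = 0"
    proof (rule ccontr)
      assume "f v \<noteq> 0"
      hence "f v = 2" using z[OF v(1)] by auto
      have "f x + f v \<le> (\<Sum>u\<in>V. f u)" using sum_ins[of x "{v}" f] v x by auto
      thus False using w x \<open>f v = 2\<close> by auto
    qed
    show "E v x"
    proof (rule ccontr)
      assume "\<not> E v x"
      hence "x \<notin> nbhd V E v" by (auto simp: nbhd_def)
      hence "f x + (\<Sum>u\<in>nbhd V E v. f u) \<le> (\<Sum>u\<in>V. f u)" using sum_ins[OF x(1) _ nb_sub] by blast
      moreover have "(\<Sum>u\<in>nbhd V E v. f u) \<ge> 2" using fc[OF v(1)] fv by auto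
      ultimately show False using w x by linarith
    qed
  qed
qed

lemma indicator_220:
  assumes "S \<subseteq> V" "\<forall>v\<in>V. card (nbhd V E v \<inter> S) \<ge> 2"
  shows "is_220_function V E (\<lambda>v. if v \<in> S then 1 else 0)"
    "(\<Sum>v\<in>V. (\<lambda>v. if v \<in> S then 1 else 0::nat) v) = card S"
proof -
  show "is_220_function V E (\<lambda>v. if v \<in> S then 1 else 0)"
    unfolding is_220_function_def
    using assms sum_indicator_card[OF fin_nb] by auto
  show "(\<Sum>v\<in>V. (\<lambda>v. if v \<in> S then 1 else 0::nat) v) = card S"
    using sum_indicator_card[OF finV, of S] assms(1) by (simp add: Int_absorb1)
qed

lemma nonempty_220: "{(\<Sum>v\<in>V. f v) | f. is_220_function V E f} \<noteq> {}"
proof -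
  have "is_220_function V E (\<lambda>v. if v \<in> V then 2 else 0)"
    unfolding is_220_function_def by auto
  thus ?thesis by blast
qed

lemma nonempty_dom: "{card S | S. dominating_set V E S} \<noteq> {}"
proof -
  have "dominating_set V E V" by (auto simp: dominating_set_def)
  thus ?thesis by blast
qed

end

theorem theorem32:
  fixes V :: "'a set" and E :: "'a \<Rightarrow> 'a \<Rightarrow> bool"
  assumes "simple_graph V E"
  shows "gamma_220 V E = 3 \<longleftrightarrow>
    (min_degree_ge2 V E \<and> double_total_domination_number V E = 3
     \<and> domination_number V E + 1 = 3)"
proof -
  note G = assms
  let ?W = "{(\<Sum>v\<in>V. f v) | f. is_220_function V E f}"
  let ?D = "{card S | S. dominating_set V E S}"
  let ?T = "{card S | S. double_total_dominating_set V E S}"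
  have dom1: "domination_number V E \<le> 1" if x: "x \<in> V" "\<forall>v\<in>V. v \<noteq> x \<longrightarrow> E v x" for x
  proof -
    have "dominating_set V E {x}" using x by (auto simp: dominating_set_def)
    hence "1 \<in> ?D" unfolding mem_Collect_eq by (intro exI[of _ "{x}"]) simp
    thus ?thesis unfolding domination_number_def by (rule cInf_lower[OF _ bdd_below_bot])
  qed
  show ?thesis
  proof
    assume g: "gamma_220 V E = 3"
    have "3 \<in> ?W \<and> (\<forall>y\<in>?W. 3 \<le> y)"
      using g unfolding gamma_220_def by (rule Inf_nat_eq[OF nonempty_220[OF G], THEN iffD1])
    hence g3: "3 \<in> ?W" and gmin: "\<forall>y\<in>?W. 3 \<le> y" by blast+
    have ne: "V \<noteq> {}"
    proof
      assume "V = {}"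
      hence "is_220_function V E (\<lambda>_. 0)" by (auto simp: is_220_function_def)
      hence "(\<Sum>v\<in>V. (\<lambda>_. 0::nat) v) \<in> ?W" by blast
      hence "3 \<le> (\<Sum>v\<in>V. (\<lambda>_. 0::nat) v)" using gmin by blast
      thus False by simp
    qed
    have nodom: "\<not> (\<forall>v\<in>V. v \<noteq> x \<longrightarrow> E v x)" if x: "x \<in> V" for x
    proof
      assume h: "\<forall>v\<in>V. v \<noteq> x \<longrightarrow> E v x"
      have "(\<Sum>v\<in>V. (\<lambda>v. if v = x then 2 else 0::nat) v) \<in> ?W"
        using singleton_220[OF G x h] by blast
      hence "3 \<le> (\<Sum>v\<in>V. (\<lambda>v. if v = x then 2 else 0::nat) v)" using gmin by blast
      thus False using singleton_220(2)[OF G x h] by simp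
    qed
    obtain f where f: "is_220_function V E f" "(\<Sum>v\<in>V. f v) = 3" using g3 by auto
    have f2: "\<And>v. v \<in> V \<Longrightarrow> f v \<le> 2" and fout: "\<And>v. v \<notin> V \<Longrightarrow> f v = 0"
      and fc: "\<And>v. v \<in> V \<Longrightarrow> f v \<in> {0,1} \<Longrightarrow> (\<Sum>u\<in>nbhd V E v. f u) \<ge> 2"
      using f(1) by (auto simp: is_220_function_def)
    have f1: "f x \<le> 1" if x: "x \<in> V" for x
    proof (rule ccontr)
      assume "\<not> f x \<le> 1"
      hence fx: "f x = 2" using f2[OF x] by auto
      have "E v x" if v: "v \<in> V" "v \<noteq> x" for v
      proof -
        have "f x + f v \<le> (\<Sum>u\<in>V. f u)" using sum_ins[OF G x, of "{v}" f] v by auto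
        hence "f v \<le> 1" using f(2) fx by auto
        hence "f v \<in> {0,1}" by auto
        hence s2: "(\<Sum>u\<in>nbhd V E v. f u) \<ge> 2" using fc[OF v(1)] by blast
        show "E v x"
        proof (rule ccontr)
          assume "\<not> E v x"
          hence "x \<notin> nbhd V E v" by (auto simp: nbhd_def)
          hence "f x + (\<Sum>u\<in>nbhd V E v. f u) \<le> (\<Sum>u\<in>V. f u)"
            using sum_ins[OF G x _ nb_sub[OF G]] by blast
          thus False using s2 f(2) fx by linarith
        qed
      qed
      thus False using nodom[OF x] by blast
    qed
    define S where "S = {v\<in>V. f v = 1}"
    have SV: "S \<subseteq> V" by (auto simp: S_def)
    have feq: "f = (\<lambda>v. if v \<in> S then 1 else 0)"
    proof
      fix v show "f v = (if v \<in> S then 1 else 0)"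
        using f1[of v] fout[of v] by (cases "v \<in> V") (auto simp: S_def)
    qed
    have cS: "\<forall>v\<in>V. card (nbhd V E v \<inter> S) \<ge> 2"
    proof
      fix v assume v: "v \<in> V"
      have "f v \<in> {0,1}" using f1[OF v] by auto
      hence "(\<Sum>u\<in>nbhd V E v. f u) \<ge> 2" using fc[OF v] by blast
      thus "card (nbhd V E v \<inter> S) \<ge> 2"
        using sum_indicator_card[OF fin_nb[OF G, of v], of S] feq by simp
    qed
    have card3: "card S = 3" using indicator_220(2)[OF G SV cS] f(2) feq by simp
    have md: "min_degree_ge2 V E" unfolding min_degree_ge2_def
    proof
      fix v assume v: "v \<in> V"
      have "card (nbhd V E v \<inter> S) \<le> card (nbhd V E v)"
        using fin_nb[OF G] by (intro card_mono) auto
      thus "2 \<le> card (nbhd V E v)" using cS v by auto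
    qed
    have dtd: "double_total_domination_number V E = 3"
    proof -
      have "double_total_dominating_set V E S" using SV cS by (simp add: double_total_dominating_set_def)
      hence in3: "3 \<in> ?T" using card3 unfolding mem_Collect_eq by (intro exI[of _ S]) simp
      have "\<forall>y\<in>?T. 3 \<le> y"
      proof
        fix y assume "y \<in> ?T"
        then obtain S' where S': "double_total_dominating_set V E S'" "y = card S'" by auto
        have "(\<Sum>v\<in>V. (\<lambda>v. if v \<in> S' then 1 else 0::nat) v) \<in> ?W"
          using indicator_220(1)[OF G, of S'] S'(1) by (auto simp: double_total_dominating_set_def)
        thus "3 \<le> y" using gmin indicator_220(2)[OF G, of S'] S'
          by (auto simp: double_total_dominating_set_def)
      qed
      thus ?thesis unfolding double_total_domination_number_def
        using in3 by (intro Inf_nat_eq[THEN iffD2]) auto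
    qed
    have dn: "domination_number V E = 2"
    proof -
      obtain a b c where abc: "S = {a,b,c}" "a \<noteq> b" "a \<noteq> c" "b \<noteq> c"
        using card3 card_3_iff by metis
      have "dominating_set V E {a,b}" unfolding dominating_set_def
      proof (intro conjI ballI)
        show "{a,b} \<subseteq> V" using SV abc by auto
      next
        fix v assume v: "v \<in> V"
        show "v \<in> {a,b} \<or> (\<exists>u\<in>{a,b}. E v u)"
        proof (rule ccontr)
          assume "\<not> ?thesis"
          hence "nbhd V E v \<inter> S \<subseteq> {c}" using abc by (auto simp: nbhd_def)
          hence "card (nbhd V E v \<inter> S) \<le> card {c}" by (intro card_mono) auto
          thus False using cS v by auto
        qed
      qed
      hence in2: "2 \<in> ?D" using abc unfolding mem_Collect_eq by (intro exI[of _ "{a,b}"]) simp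
      have "\<forall>y\<in>?D. 2 \<le> y"
      proof
        fix y assume "y \<in> ?D"
        then obtain D where D: "dominating_set V E D" "y = card D" by auto
        have finD: "finite D" using D(1) finV[OF G] finite_subset by (auto simp: dominating_set_def)
        show "2 \<le> y"
        proof (rule ccontr)
          assume "\<not> 2 \<le> y"
          hence "card D = 0 \<or> card D = 1" using D by auto
          thus False
          proof
            assume "card D = 0"
            hence "D = {}" using finD by auto
            thus False using D(1) ne by (auto simp: dominating_set_def)
          next
            assume "card D = 1"
            then obtain x where "D = {x}" using card_1_singletonE by blast
            thus False using D(1) nodom by (auto simp: dominating_set_def)
          qed
        qed
      qed
      thus ?thesis unfolding domination_number_def
        using in2 by (intro Inf_nat_eq[OF nonempty_dom[OF G], THEN iffD2]) simp
    qed
    show "min_degree_ge2 V E \<and> double_total_domination_number V E = 3 \<and> domination_number V E + 1 = 3"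
      using md dtd dn by simp
  next
    assume h: "min_degree_ge2 V E \<and> double_total_domination_number V E = 3 \<and> domination_number V E + 1 = 3"
    have Tne: "?T \<noteq> {}"
    proof -
      have "\<forall>v\<in>V. nbhd V E v \<inter> V = nbhd V E v" using nb_sub[OF G] by blast
      hence "double_total_dominating_set V E V" using h
        unfolding double_total_dominating_set_def min_degree_ge2_def by simp
      thus ?thesis by blast
    qed
    have "3 \<in> ?T \<and> (\<forall>y\<in>?T. 3 \<le> y)" using h unfolding double_total_domination_number_def
      by (intro Inf_nat_eq[OF Tne, THEN iffD1]) simp
    then obtain S where S: "double_total_dominating_set V E S" "card S = 3" by auto
    have SV: "S \<subseteq> V" and cS: "\<forall>v\<in>V. card (nbhd V E v \<inter> S) \<ge> 2"
      using S(1) by (auto simp: double_total_dominating_set_def)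
    have in3: "3 \<in> ?W" using indicator_220[OF G SV cS] S(2) unfolding mem_Collect_eq by (intro exI[of _ "\<lambda>v. if v \<in> S then 1 else 0"]) simp
    have dn2: "domination_number V E = 2" using h by simp
    have ne: "V \<noteq> {}"
    proof
      assume "V = {}"
      hence "dominating_set V E {}" by (auto simp: dominating_set_def)
      hence "0 \<in> ?D" unfolding mem_Collect_eq by (intro exI[of _ "{}"]) simp
      hence "domination_number V E \<le> 0" unfolding domination_number_def
        by (rule cInf_lower[OF _ bdd_below_bot])
      thus False using dn2 by simp
    qed
    have "\<forall>y\<in>?W. 3 \<le> y"
    proof
      fix y assume "y \<in> ?W"
      then obtain f where f: "is_220_function V E f" "y = (\<Sum>v\<in>V. f v)" by auto
      show "3 \<le> y"
      proof (rule ccontr)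
        assume "\<not> 3 \<le> y"
        then obtain x where "x \<in> V" "\<forall>v\<in>V. v \<noteq> x \<longrightarrow> E v x"
          using small_220[OF G f(1) _ ne] f(2) by auto
        hence "domination_number V E \<le> 1" by (rule dom1)
        thus False using dn2 by simp
      qed
    qed
    thus "gamma_220 V E = 3" unfolding gamma_220_def
      using in3 by (intro Inf_nat_eq[OF nonempty_220[OF G], THEN iffD2]) simp
  qed
qed

end
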